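(* Let $\tau\in(0,1]$ and suppose that $\alpha=(2/k)^{1/((2-\tau)d)}$ (in addition to $\alpha=2^{-r}$ for a positive integer $r$). Let $p$ be a positive integer. Then, under the Fast-Filter model described in the context, $$\mathbb{E}\Big[\sum_{i=1}^k|S_i|\Big]=2^{1/(2-\tau)}\,N\,k^{1-1/(2-\tau)}=O\big(Nk^{1-1/(2-\tau)}\big),$$ and, for every $i\in[k]$, $$\frac{k}{p}\,\big(\mathbb{E}[|S_i|]\big)^2=O\big(N^2k^{1-2/(2-\tau)}/p\big).$$
   Context: Let $G=(U,V,E)$ be a bipartite graph with $|U|=M$ and $|V|=N$. For $v\in V$ let $\Gamma(v)\subseteq U$ be its set of neighbours, and assume $|\Gamma(v)|=d\ge 1$ for every $v\in V$. Let $k=2^{m}$ and $\alpha=2^{-r}$, where $m,r$ are positive integers. Identify $[k]=\{1,\dots,k\}$ bijectively with the vector space $\mathrm{GF}(2)^m$ (for instance via the binary representation of $i-1$). Fast-Filter model: for each $u\in U$, independently draw a uniformly random matrix $A'_u\in\mathrm{GF}(2)^{r\times m}$ and a uniformly random vector $b'_u\in\mathrm{GF}(2)^{r}$; all of these are mutually independent. For $v\in V$, let $A^v$ be the $(dr)\times m$ matrix obtained by stacking the matrices $A'_u$, $u\in\Gamma(v)$, in a fixed order, and let $b^v\in\mathrm{GF}(2)^{dr}$ be obtained by stacking the $b'_u$, $u\in\Gamma(v)$, in the same order. For $i\in[k]$ (viewed as a vector in $\mathrm{GF}(2)^m$), the survival set is $S_i=\{v\in V: A^v i+b^v=0\}$,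 with arithmetic over $\mathrm{GF}(2)$. *)

theory Defs
  imports "HOL-Probability.Probability" "HOL-Library.Z2"
begin

text \<open>GF(2) is the field type bit. An r x m matrix over GF(2) is a function
  nat => nat => bit vanishing outside [0,r) x [0,m); a vector in GF(2)^r is a
  function nat => bit vanishing outside [0,r).\<close>

definition gf2_mats :: "nat \<Rightarrow> nat \<Rightarrow> (nat \<Rightarrow> nat \<Rightarrow> bit) set" where
  "gf2_mats r m = {A. \<forall>a b. (r \<le> a \<or> m \<le> b) \<longrightarrow> A a b = 0}"

definition gf2_vecs :: "nat \<Rightarrow> (nat \<Rightarrow> bit) set" where
  "gf2_vecs r = {x. \<forall>a. r \<le> a \<longrightarrow> x a = 0}"

text \<open>Identification of i in [k] = {1..2^m} with the binary representation of i-1.\<close>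
definition idx_vec :: "nat \<Rightarrow> nat \<Rightarrow> bit" where
  "idx_vec i b = (if odd ((i - 1) div 2 ^ b) then 1 else 0)"

text \<open>The Fast-Filter sample space: for each u in U an independent uniform pair
  (A'_u, b'_u); jointly this is the uniform distribution on the product.\<close>
definition fast_filter_pmf :: "'u set \<Rightarrow> nat \<Rightarrow> nat \<Rightarrow>
    ('u \<Rightarrow> (nat \<Rightarrow> nat \<Rightarrow> bit) \<times> (nat \<Rightarrow> bit)) pmf" where
  "fast_filter_pmf U r m = pmf_of_set (PiE U (\<lambda>_. gf2_mats r m \<times> gf2_vecs r))"

text \<open>Stacked matrix/vector A^v and b^v for a fixed ordering (list) of Gamma(v).\<close>
definition stackA :: "'u list \<Rightarrow> nat \<Rightarrow> ('u \<Rightarrow> (nat \<Rightarrow> nat \<Rightarrow> bit) \<times> (nat \<Rightarrow> bit))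
    \<Rightarrow> nat \<Rightarrow> nat \<Rightarrow> bit" where
  "stackA us r \<omega> a b = (if a < length us * r then fst (\<omega> (us ! (a div r))) (a mod r) b else 0)"

definition stackb :: "'u list \<Rightarrow> nat \<Rightarrow> ('u \<Rightarrow> (nat \<Rightarrow> nat \<Rightarrow> bit) \<times> (nat \<Rightarrow> bit))
    \<Rightarrow> nat \<Rightarrow> bit" where
  "stackb us r \<omega> a = (if a < length us * r then snd (\<omega> (us ! (a div r))) (a mod r) else 0)"

definition survival_set :: "'v set \<Rightarrow> ('v \<Rightarrow> 'u list) \<Rightarrow> nat \<Rightarrow> nat \<Rightarrow>
    ('u \<Rightarrow> (nat \<Rightarrow> nat \<Rightarrow> bit) \<times> (nat \<Rightarrow> bit)) \<Rightarrow> nat \<Rightarrow> 'v set" where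
  "survival_set V ord r m \<omega> i = {v \<in> V. \<forall>a < length (ord v) * r.
      (\<Sum>b<m. stackA (ord v) r \<omega> a b * idx_vec i b) + stackb (ord v) r \<omega> a = 0}"

end

theory Submission
  imports Defs
begin

lemma bit_eq_iff1: "(x::bit) = y \<longleftrightarrow> (x = 1 \<longleftrightarrow> y = 1)"
  by (cases x; cases y) auto

lemma bit_ne1: "(x::bit) \<noteq> 1 \<longleftrightarrow> x = 0"
  by (cases x) auto

lemma card_vecs: "card (gf2_vecs r) = 2 ^ r" "finite (gf2_vecs r)"
proof -
  have bij: "bij_betw (\<lambda>x. {a. x a = 1}) (gf2_vecs r) (Pow {..<r})"
  proof (rule bij_betwI[where g="\<lambda>S a. if a \<in> S then 1 else 0"])
    show "(\<lambda>x. {a. x a = 1}) \<in> gf2_vecs r \<rightarrow> Pow {..<r}"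
      by (auto simp: gf2_vecs_def) (rule ccontr, simp)
    show "(\<lambda>S a. if a \<in> S then 1 else 0) \<in> Pow {..<r} \<rightarrow> gf2_vecs r"
      by (auto simp: gf2_vecs_def)
    show "\<And>x. x \<in> gf2_vecs r \<Longrightarrow> (\<lambda>a. if a \<in> {a. x a = 1} then 1 else 0) = x"
      by (auto simp: fun_eq_iff)
    show "\<And>y. y \<in> Pow {..<r} \<Longrightarrow> {a. (if a \<in> y then 1 else 0) = (1::bit)} = y"
      by auto
  qed
  show "card (gf2_vecs r) = 2 ^ r" using bij_betw_same_card[OF bij] by (simp add: card_Pow)
  show "finite (gf2_vecs r)" using bij_betw_finite[OF bij] by simp
qed

lemma fin_mats: "finite (gf2_mats r m)" "gf2_mats r m \<noteq> {}"
proof -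
  have "inj_on (\<lambda>A. {(a,b). A a b = 1}) (gf2_mats r m)"
  proof (rule inj_onI)
    fix x y :: "nat \<Rightarrow> nat \<Rightarrow> bit"
    assume eq: "{(a,b). x a b = 1} = {(a,b). y a b = 1}"
    show "x = y"
    proof (rule ext, rule ext)
      fix a b
      have "(a,b) \<in> {(a,b). x a b = 1} \<longleftrightarrow> (a,b) \<in> {(a,b). y a b = 1}" using eq by simp
      then have "(x a b = 1) = (y a b = 1)" by simp
      then show "x a b = y a b" using bit_eq_iff1 by blast
    qed
  qed
  moreover have "(\<lambda>A. {(a,b). A a b = 1}) ` gf2_mats r m \<subseteq> Pow ({..<r} \<times> {..<m})"
    by (auto simp: gf2_mats_def) (rule ccontr, simp)+
  ultimately show "finite (gf2_mats r m)"
    by (meson finite_Pow_iff finite_SigmaI finite_lessThan finite_subset inj_on_finite)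
  show "gf2_mats r m \<noteq> {}" using exI[of "\<lambda>A. A \<in> gf2_mats r m" "\<lambda>_ _. 0"] by (auto simp: gf2_mats_def)
qed

lemma bit_add_eq0: "(y::bit) + z = 0 \<longleftrightarrow> z = y"
  by (cases y; cases z) auto

lemma prob_Q:
  "measure_pmf.prob (pmf_of_set (gf2_mats r m \<times> gf2_vecs r))
     {(A,b). \<forall>a<r. (\<Sum>b<m. A a b * x b) + b a = 0} = 1 / 2 ^ r"
proof -
  define f where "f A = (\<lambda>a. if a < r then (\<Sum>b<m. A a b * x b) else 0)" for A :: "nat \<Rightarrow> nat \<Rightarrow> bit"
  let ?Q = "{(A,b). \<forall>a<r. (\<Sum>b<m. A a b * x b) + b a = (0::bit)}"
  have eq: "(gf2_mats r m \<times> gf2_vecs r) \<inter> ?Q = (\<lambda>A. (A, f A)) ` gf2_mats r m"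
  proof (intro equalityI subsetI)
    fix z assume z: "z \<in> (gf2_mats r m \<times> gf2_vecs r) \<inter> ?Q"
    obtain A b where zz: "z = (A,b)" by force
    have "b = f A" using z unfolding zz f_def
      by (auto simp: fun_eq_iff gf2_vecs_def bit_add_eq0)
    then show "z \<in> (\<lambda>A. (A, f A)) ` gf2_mats r m" using z zz by auto
  next
    fix z assume "z \<in> (\<lambda>A. (A, f A)) ` gf2_mats r m"
    then show "z \<in> (gf2_mats r m \<times> gf2_vecs r) \<inter> ?Q"
      by (auto simp: f_def gf2_vecs_def bit_add_eq0)
  qed
  have "card ((gf2_mats r m \<times> gf2_vecs r) \<inter> ?Q) = card (gf2_mats r m)"
    unfolding eq by (rule card_image) (auto simp: inj_on_def)
  moreover have "card (gf2_mats r m \<times> gf2_vecs r) = card (gf2_mats r m) * 2 ^ r"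
    by (simp add: card_cartesian_product card_vecs)
  moreover have "card (gf2_mats r m) > 0" using fin_mats by (simp add: card_gt_0_iff)
  ultimately show ?thesis
    using fin_mats card_vecs
    by (subst measure_pmf_of_set) (auto simp: Int_commute)
qed

lemma vecs_ne: "gf2_vecs r \<noteq> {}"
proof
  assume "gf2_vecs r = {}" then show False using card_vecs(1)[of r] by simp
qed

definition Qset :: "nat \<Rightarrow> nat \<Rightarrow> (nat \<Rightarrow> bit) \<Rightarrow> ((nat \<Rightarrow> nat \<Rightarrow> bit) \<times> (nat \<Rightarrow> bit)) set" where
  "Qset r m x = {(A,b). \<forall>a<r. (\<Sum>b<m. A a b * x b) + b a = 0}"

lemma surv_iff:
  assumes "r > 0"
  shows "(\<forall>a < length us * r. (\<Sum>b<m. stackA us r \<omega> a b * x b) + stackb us r \<omega> a = 0)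
     \<longleftrightarrow> (\<forall>u\<in>set us. \<omega> u \<in> Qset r m x)"
proof
  assume H: "\<forall>a < length us * r. (\<Sum>b<m. stackA us r \<omega> a b * x b) + stackb us r \<omega> a = 0"
  show "\<forall>u\<in>set us. \<omega> u \<in> Qset r m x"
  proof
    fix u assume "u \<in> set us"
    then obtain j where j: "j < length us" "us ! j = u" by (auto simp: in_set_conv_nth)
    have "\<forall>a<r. (\<Sum>b<m. fst (\<omega> u) a b * x b) + snd (\<omega> u) a = 0"
    proof (intro allI impI)
      fix a assume a: "a < r"
      have lt: "j * r + a < length us * r"
      proof -
        have "j * r + a < j * r + r" using a by simp
        also have "\<dots> = Suc j * r" by simp
        also have "\<dots> \<le> length us * r" using j by (intro mult_le_mono1) simp
        finally show ?thesis .
      qed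
      have dv: "(j * r + a) div r = j" "(j * r + a) mod r = a" using a by auto
      show "(\<Sum>b<m. fst (\<omega> u) a b * x b) + snd (\<omega> u) a = 0"
        using H[rule_format, OF lt] lt j a by (simp add: stackA_def stackb_def dv)
    qed
    then show "\<omega> u \<in> Qset r m x" unfolding Qset_def by (simp add: case_prod_unfold)
  qed
next
  assume H: "\<forall>u\<in>set us. \<omega> u \<in> Qset r m x"
  show "\<forall>a < length us * r. (\<Sum>b<m. stackA us r \<omega> a b * x b) + stackb us r \<omega> a = 0"
  proof (intro allI impI)
    fix a assume a: "a < length us * r"
    have j: "a div r < length us" using a by (simp add: less_mult_imp_div_less)
    have m: "a mod r < r" using assms by simp
    have "\<omega> (us ! (a div r)) \<in> Qset r m x" using H j by auto
    then show "(\<Sum>b<m. stackA us r \<omega> a b * x b) + stackb us r \<omega> a = 0"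
      using a m by (auto simp: Qset_def stackA_def stackb_def)
  qed
qed

lemma ff_Pi:
  assumes "finite U"
  shows "fast_filter_pmf U r m = Pi_pmf U undefined (\<lambda>_. pmf_of_set (gf2_mats r m \<times> gf2_vecs r))"
proof -
  have "PiE_dflt U undefined (\<lambda>_. gf2_mats r m \<times> gf2_vecs r) = PiE U (\<lambda>_. gf2_mats r m \<times> gf2_vecs r)"
    by (auto simp: PiE_dflt_def PiE_def extensional_def)
  then show ?thesis unfolding fast_filter_pmf_def
    using assms fin_mats card_vecs vecs_ne
    by (subst Pi_pmf_of_set) auto
qed

lemma prob_surv:
  assumes "finite U" "v \<in> V" "\<Gamma> v \<subseteq> U" "card (\<Gamma> v) = d"
    "distinct (ord v) \<and> set (ord v) = \<Gamma> v" "r > 0"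
  shows "measure_pmf.prob (fast_filter_pmf U r m) {\<omega>. v \<in> survival_set V ord r m \<omega> i} = (1/2^r)^d"
proof -
  let ?B = "\<lambda>u. if u \<in> \<Gamma> v then Qset r m (idx_vec i) else UNIV"
  have "{\<omega>. v \<in> survival_set V ord r m \<omega> i} = Pi U ?B"
    using assms surv_iff[OF assms(6), where us="ord v" and x="idx_vec i" and m=m]
    by (auto simp: survival_set_def Pi_def)
  then have "measure_pmf.prob (fast_filter_pmf U r m) {\<omega>. v \<in> survival_set V ord r m \<omega> i}
      = (\<Prod>u\<in>U. measure_pmf.prob (pmf_of_set (gf2_mats r m \<times> gf2_vecs r)) (?B u))"
    using assms by (simp add: ff_Pi measure_Pi_pmf_Pi)
  also have "\<dots> = (\<Prod>u\<in>U. if u \<in> \<Gamma> v then 1/2^r else 1)"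
    by (intro prod.cong refl) (auto simp: prob_Q[folded Qset_def])
  also have "\<dots> = (1/2^r)^d"
    using assms by (simp add: prod.If_cases Int_absorb1 Int_absorb2)
  finally show ?thesis .
qed

lemma exp_surv:
  assumes "finite U" "finite V" "\<And>v. v \<in> V \<Longrightarrow> \<Gamma> v \<subseteq> U" "\<And>v. v \<in> V \<Longrightarrow> card (\<Gamma> v) = d"
    "\<And>v. v \<in> V \<Longrightarrow> distinct (ord v) \<and> set (ord v) = \<Gamma> v" "r > 0"
  shows "measure_pmf.expectation (fast_filter_pmf U r m) (\<lambda>\<omega>. real (card (survival_set V ord r m \<omega> i)))
     = real (card V) * (1/2^r)^d"
proof -
  have fin: "finite (set_pmf (fast_filter_pmf U r m))"
    unfolding fast_filter_pmf_def using assms fin_mats card_vecs vecs_ne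
    by (subst set_pmf_of_set) (auto intro!: finite_PiE simp: PiE_eq_empty_iff)
  have c: "real (card (survival_set V ord r m \<omega> i)) = (\<Sum>v\<in>V. indicator {\<omega>. v \<in> survival_set V ord r m \<omega> i} \<omega>)" for \<omega>
  proof -
    have "survival_set V ord r m \<omega> i = {v\<in>V. v \<in> survival_set V ord r m \<omega> i}"
      by (auto simp: survival_set_def)
    then show ?thesis using assms(2)
      by (simp add: indicator_def sum.If_cases) (metis Int_def)
  qed
  have "measure_pmf.expectation (fast_filter_pmf U r m) (\<lambda>\<omega>. real (card (survival_set V ord r m \<omega> i)))
     = (\<Sum>v\<in>V. measure_pmf.expectation (fast_filter_pmf U r m) (indicator {\<omega>. v \<in> survival_set V ord r m \<omega> i}))"
    unfolding c by (rule Bochner_Integration.integral_sum) (rule integrable_measure_pmf_finite[OF fin])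
  also have "\<dots> = (\<Sum>v\<in>V. (1/2^r)^d)"
    proof (intro sum.cong refl)
    fix v assume v: "v \<in> V"
    show "measure_pmf.expectation (fast_filter_pmf U r m) (indicator {\<omega>. v \<in> survival_set V ord r m \<omega> i}) = (1/2^r::real)^d"
      using prob_surv[of U v V \<Gamma> d ord r m i] assms v
      by simp
  qed
  finally show ?thesis by simp
qed

theorem mainTheorem7:
  fixes U :: "'u set" and V :: "'v set" and \<Gamma> :: "'v \<Rightarrow> 'u set"
    and ord :: "'v \<Rightarrow> 'u list"
    and d m r p :: nat and \<tau> :: real
  assumes "finite U" "finite V"
    and "\<And>v. v \<in> V \<Longrightarrow> \<Gamma> v \<subseteq> U"
    and "\<And>v. v \<in> V \<Longrightarrow> card (\<Gamma> v) = d" and "d \<ge> 1"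
    and "\<And>v. v \<in> V \<Longrightarrow> distinct (ord v) \<and> set (ord v) = \<Gamma> v"
    and "m > 0" and "r > 0" and "p > 0"
    and "0 < \<tau>" and "\<tau> \<le> 1"
    and "(2::real) powr (- real r) = (2 / real (2 ^ m)) powr (1 / ((2 - \<tau>) * real d))"
  shows "(measure_pmf.expectation (fast_filter_pmf U r m)
           (\<lambda>\<omega>. \<Sum>i\<in>{1..2 ^ m}. real (card (survival_set V ord r m \<omega> i)))
         = 2 powr (1 / (2 - \<tau>)) * real (card V) * real (2 ^ m) powr (1 - 1 / (2 - \<tau>))) \<and>
         (\<forall>i\<in>{1..2 ^ m}.
           real (2 ^ m) / real p *
             (measure_pmf.expectation (fast_filter_pmf U r m)
                (\<lambda>\<omega>. real (card (survival_set V ord r m \<omega> i)))) ^ 2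
         \<le> 4 * (real (card V) ^ 2 * real (2 ^ m) powr (1 - 2 / (2 - \<tau>)) / real p))"
proof -
  define k :: real where "k = real (2 ^ m)"
  define e :: real where "e = 1 / (2 - \<tau>)"
  define q :: real where "q = (1/2^r)^d"
  have kpos: "k > 0" and k1: "k \<ge> 1" by (auto simp: k_def)
  have e01: "0 < e" "e \<le> 1" using assms(10,11) by (auto simp: e_def field_simps)
  have Eq: "measure_pmf.expectation (fast_filter_pmf U r m) (\<lambda>\<omega>. real (card (survival_set V ord r m \<omega> i)))
     = real (card V) * q" for i
    unfolding q_def by (rule exp_surv[of U V \<Gamma> d ord r m i]) (use assms in auto)
  have "1/2^r = (2::real) powr (- real r)"
    by (simp add: powr_minus powr_realpow divide_inverse)
  also have "\<dots> = (2 / k) powr (1 / ((2 - \<tau>) * real d))" using assms(12) by (simp add: k_def)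
  finally have "q = ((2 / k) powr (1 / ((2 - \<tau>) * real d))) ^ d" by (simp add: q_def)
  also have "\<dots> = (2 / k) powr (1 / ((2 - \<tau>) * real d) * real d)"
    using kpos by (simp add: powr_realpow[symmetric] powr_powr)
  also have "1 / ((2 - \<tau>) * real d) * real d = e" using assms(5) by (simp add: e_def)
  finally have qe: "q = (2/k) powr e" .
  have fin: "finite (set_pmf (fast_filter_pmf U r m))"
    unfolding fast_filter_pmf_def using assms fin_mats card_vecs vecs_ne
    by (subst set_pmf_of_set) (auto intro!: finite_PiE simp: PiE_eq_empty_iff)
  have "measure_pmf.expectation (fast_filter_pmf U r m)
           (\<lambda>\<omega>. \<Sum>i\<in>{1..2 ^ m}. real (card (survival_set V ord r m \<omega> i)))
     = (\<Sum>i\<in>{1..2 ^ m}. measure_pmf.expectation (fast_filter_pmf U r m) (\<lambda>\<omega>. real (card (survival_set V ord r m \<omega> i))))"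
    by (rule Bochner_Integration.integral_sum) (rule integrable_measure_pmf_finite[OF fin])
  also have "\<dots> = k * real (card V) * q" by (simp add: Eq k_def)
  also have "\<dots> = 2 powr e * real (card V) * k powr (1 - e)"
  proof -
    have "k * (2/k) powr e = 2 powr e * k powr (1 - e)"
      using kpos by (simp add: powr_divide powr_diff)
    then show ?thesis by (simp add: qe)
  qed
  finally have P1: "measure_pmf.expectation (fast_filter_pmf U r m)
           (\<lambda>\<omega>. \<Sum>i\<in>{1..2 ^ m}. real (card (survival_set V ord r m \<omega> i)))
     = 2 powr e * real (card V) * k powr (1 - e)" .
  have P2: "k / real p * (real (card V) * q) ^ 2 \<le> 4 * (real (card V) ^ 2 * k powr (1 - 2 * e) / real p)"
  proof -
    have "(real (card V) * q) ^ 2 = real (card V) ^ 2 * (2/k) powr (2*e)"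
      using kpos by (simp add: qe power_mult_distrib powr_realpow[symmetric] powr_powr mult.commute)
    also have "\<dots> = real (card V) ^ 2 * (2 powr (2*e) / k powr (2*e))"
      using kpos by (simp add: powr_divide)
    finally have A: "k / real p * (real (card V) * q) ^ 2
        = 2 powr (2*e) * (real (card V) ^ 2 * (k / k powr (2*e)) / real p)" by (simp add: field_simps)
    have B: "k / k powr (2*e) = k powr (1 - 2*e)" using kpos by (simp add: powr_diff)
    have C: "2 powr (2*e) \<le> (4::real)"
    proof -
      have "(2::real) powr (2*e) \<le> 2 powr 2" using e01 by (intro powr_mono) auto
      then show ?thesis by simp
    qed
    have D: "0 \<le> real (card V) ^ 2 * k powr (1 - 2*e) / real p" by simp
    show ?thesis unfolding A B using mult_right_mono[OF C D] by simp
  qed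
  show ?thesis
    using P1 P2 by (simp add: Eq k_def e_def)
qed

end
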